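(* Consider problem (PI): minimize $f(x)$ subject to $x\in X$, $g_i(x)\le 0$, $i=1,\dots,m$, where $\Gamma\subseteq\mathbb R^n$ is an open convex set and $X\subseteq\Gamma$ is open and convex. Let $\bar S$ be its solution set and $\bar x\in\bar S$. Assume $f:\Gamma\to\mathbb R$ is continuously differentiable and quasiconvex on $\Gamma$, $g_i$ for $i\in I(\bar x)$ are differentiable and quasiconvex on $\Gamma$, $g_i$ for $i\notin I(\bar x)$ are continuous at $\bar x$, $\nabla f(\bar x)\ne 0$, MFCQ holds at $\bar x$, and $\lambda\in\mathbb R^m$ is a fixed multiplier with $\lambda_i\ge0$, $\lambda_ig_i(\bar x)=0$ for all $i$ and $\nabla f(\bar x)+\sum_{i\in I(\bar x)}\lambda_i\nabla g_i(\bar x)=0$. Define \[ \hat S_1''(\lambda):=\Big\{x\in X_1(\lambda)\ \Big|\ \nabla g_i(\bar x)^T(x-\bar x)=0\ \forall i\in\tilde I(\bar x,\lambda),\ \nabla f(x)\ne0,\ \tfrac{\nabla f(x)}{\|\nabla f(x)\|}=\tfrac{\nabla f(\bar x)}{\|\nabla f(\bar x)\|}\Big\}, \] \[ \hat S_2''(\lambda):=\Big\{x\in X_1(\lambda)\ \Big|\ \nabla g_i(\bar x)^T(x-\bar x)\ge0\ \forall i\in\tilde I(\bar x,\lambda),\ \nabla f(x)\ne0,\ \tfrac{\nabla f(x)}{\|\nabla f(x)\|}=\tfrac{\nabla f(\bar x)}{\|\nabla f(\bar x)\|}\Big\}. \] Then $\bar S=\hat S_1''(\lambda)=\hat S_2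''(\lambda)$.
   Context: Quasiconvexity on $\Gamma$: $f(x+t(y-x))\le\max\{f(x),f(y)\}$ for all $x,y\in\Gamma$, $t\in[0,1]$. Feasible set $S:=\{x\in X\mid g_i(x)\le0,\ i=1,\dots,m\}$; $\bar S$ the set of global minimizers of $f$ on $S$. Active index set $I(x):=\{i\mid g_i(x)=0\}$. MFCQ holds at $\bar x$ iff there is $y\in\mathbb R^n$ with $\nabla g_i(\bar x)^Ty<0$ for all $i\in I(\bar x)$. Define $\tilde I(\bar x,\lambda):=\{i\mid g_i(\bar x)=0,\ \lambda_i>0\}$ and $X_1(\lambda):=\{x\in X\mid g_i(x)=0\ \forall i\in\tilde I(\bar x,\lambda),\ g_i(x)\le0\ \forall i\notin\tilde I(\bar x,\lambda)\}$. *)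

theory Defs
  imports "HOL-Analysis.Analysis"
begin

definition quasiconvex_on :: "'a::real_vector set \<Rightarrow> ('a \<Rightarrow> real) \<Rightarrow> bool" where
  "quasiconvex_on \<Gamma> f \<longleftrightarrow>
     (\<forall>x\<in>\<Gamma>. \<forall>y\<in>\<Gamma>. \<forall>t::real. 0 \<le> t \<and> t \<le> 1 \<longrightarrow> f (x + t *\<^sub>R (y - x)) \<le> max (f x) (f y))"

definition feasible_set :: "'a set \<Rightarrow> nat \<Rightarrow> (nat \<Rightarrow> 'a \<Rightarrow> real) \<Rightarrow> 'a set" where
  "feasible_set X m g = {x \<in> X. \<forall>i\<in>{1..m}. g i x \<le> 0}"

definition solution_set :: "'a set \<Rightarrow> nat \<Rightarrow> (nat \<Rightarrow> 'a \<Rightarrow> real) \<Rightarrow> ('a \<Rightarrow> real) \<Rightarrow> 'a set" where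
  "solution_set X m g f = {x \<in> feasible_set X m g. \<forall>y\<in>feasible_set X m g. f x \<le> f y}"

definition active_set :: "nat \<Rightarrow> (nat \<Rightarrow> 'a \<Rightarrow> real) \<Rightarrow> 'a \<Rightarrow> nat set" where
  "active_set m g x = {i \<in> {1..m}. g i x = 0}"

definition active_pos_set :: "nat \<Rightarrow> (nat \<Rightarrow> 'a \<Rightarrow> real) \<Rightarrow> 'a \<Rightarrow> (nat \<Rightarrow> real) \<Rightarrow> nat set" where
  "active_pos_set m g xbar lam = {i \<in> {1..m}. g i xbar = 0 \<and> lam i > 0}"

definition X1 :: "'a set \<Rightarrow> nat \<Rightarrow> (nat \<Rightarrow> 'a \<Rightarrow> real) \<Rightarrow> 'a \<Rightarrow> (nat \<Rightarrow> real) \<Rightarrow> 'a set" where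
  "X1 X m g xbar lam = {x \<in> X. (\<forall>i\<in>active_pos_set m g xbar lam. g i x = 0)
       \<and> (\<forall>i\<in>{1..m} - active_pos_set m g xbar lam. g i x \<le> 0)}"

text \<open>MFCQ at xbar, with dg i xbar the gradient of g i at xbar.\<close>
definition MFCQ :: "nat \<Rightarrow> (nat \<Rightarrow> 'a \<Rightarrow> real) \<Rightarrow> (nat \<Rightarrow> 'a \<Rightarrow> 'a::real_inner) \<Rightarrow> 'a \<Rightarrow> bool" where
  "MFCQ m g dg xbar \<longleftrightarrow> (\<exists>y. \<forall>i\<in>active_set m g xbar. inner (dg i xbar) y < 0)"

definition S1'' :: "'a set \<Rightarrow> nat \<Rightarrow> (nat \<Rightarrow> 'a \<Rightarrow> real) \<Rightarrow> (nat \<Rightarrow> 'a \<Rightarrow> 'a::real_inner)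
     \<Rightarrow> ('a \<Rightarrow> 'a) \<Rightarrow> 'a \<Rightarrow> (nat \<Rightarrow> real) \<Rightarrow> 'a set" where
  "S1'' X m g dg df xbar lam = {x \<in> X1 X m g xbar lam.
      (\<forall>i\<in>active_pos_set m g xbar lam. inner (dg i xbar) (x - xbar) = 0)
      \<and> df x \<noteq> 0
      \<and> (1 / norm (df x)) *\<^sub>R df x = (1 / norm (df xbar)) *\<^sub>R df xbar}"

definition S2'' :: "'a set \<Rightarrow> nat \<Rightarrow> (nat \<Rightarrow> 'a \<Rightarrow> real) \<Rightarrow> (nat \<Rightarrow> 'a \<Rightarrow> 'a::real_inner)
     \<Rightarrow> ('a \<Rightarrow> 'a) \<Rightarrow> 'a \<Rightarrow> (nat \<Rightarrow> real) \<Rightarrow> 'a set" where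
  "S2'' X m g dg df xbar lam = {x \<in> X1 X m g xbar lam.
      (\<forall>i\<in>active_pos_set m g xbar lam. inner (dg i xbar) (x - xbar) \<ge> 0)
      \<and> df x \<noteq> 0
      \<and> (1 / norm (df x)) *\<^sub>R df x = (1 / norm (df xbar)) *\<^sub>R df xbar}"

end

theory Submission
  imports Defs
begin

lemma taylor1:
  assumes "(\<phi> has_derivative (\<lambda>h. inner p h)) (at y)" "e > 0"
  obtains d where "d > 0" "\<And>z. norm (z - y) < d \<Longrightarrow> \<bar>\<phi> z - \<phi> y - inner p (z - y)\<bar> \<le> e * norm (z - y)"
  using assms unfolding has_derivative_at_alt by (metis real_norm_def)

lemma qc_weak:
  fixes \<phi> :: "'a::real_inner \<Rightarrow> real"
  assumes qc: "quasiconvex_on \<Gamma> \<phi>" and y: "y \<in> \<Gamma>" and x: "x \<in> \<Gamma>"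
    and der: "(\<phi> has_derivative (\<lambda>h. inner p h)) (at y)" and le: "\<phi> x \<le> \<phi> y"
  shows "inner p (x - y) \<le> 0"
proof (rule ccontr)
  define v where "v = x - y"
  assume "\<not> inner p (x - y) \<le> 0"
  hence pos: "inner p v > 0" by (simp add: v_def)
  hence vnz: "v \<noteq> 0" by auto
  hence nv: "norm v > 0" by simp
  define e where "e = inner p v / (2 * norm v)"
  have e: "e > 0" using pos nv by (simp add: e_def)
  obtain d where d: "d > 0" and D: "\<And>z. norm (z - y) < d \<Longrightarrow> \<bar>\<phi> z - \<phi> y - inner p (z - y)\<bar> \<le> e * norm (z - y)"
    using taylor1[OF der e] by blast
  define t where "t = min 1 (d / (2 * norm v))"
  have t0: "t > 0" using d nv by (simp add: t_def)
  have t1: "t \<le> 1" by (simp add: t_def)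
  have "t * norm v \<le> d / 2" using nv by (simp add: t_def min_def field_simps split: if_splits)
  hence "norm ((y + t *\<^sub>R v) - y) < d" using t0 d by simp
  from D[OF this] have "\<bar>\<phi> (y + t *\<^sub>R v) - \<phi> y - t * inner p v\<bar> \<le> e * (t * norm v)"
    using t0 by simp
  moreover have "e * (t * norm v) = t * inner p v / 2" using nv by (simp add: e_def field_simps)
  ultimately have "\<bar>\<phi> (y + t *\<^sub>R v) - \<phi> y - t * inner p v\<bar> \<le> t * inner p v / 2"
    by (rule ord_le_eq_trans)
  moreover have "- (\<phi> (y + t *\<^sub>R v) - \<phi> y - t * inner p v) \<le> \<bar>\<phi> (y + t *\<^sub>R v) - \<phi> y - t * inner p v\<bar>"
    by (rule abs_ge_minus_self)
  ultimately have low: "\<phi> (y + t *\<^sub>R v) - \<phi> y - t * inner p v \<ge> - (t * inner p v / 2)"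
    by linarith
  have "t * inner p v > 0" using t0 pos by simp
  hence "\<phi> (y + t *\<^sub>R v) > \<phi> y" using low by linarith
  moreover have "\<phi> (y + t *\<^sub>R (x - y)) \<le> max (\<phi> y) (\<phi> x)"
    using qc y x t0 t1 unfolding quasiconvex_on_def by auto
  ultimately show False using le by (simp add: v_def)
qed

lemma qc_strict:
  fixes \<phi> :: "'a::real_inner \<Rightarrow> real"
  assumes qc: "quasiconvex_on \<Gamma> \<phi>" and op: "open \<Gamma>" and y: "y \<in> \<Gamma>" and x: "x \<in> \<Gamma>"
    and der: "(\<phi> has_derivative (\<lambda>h. inner p h)) (at y)" and pnz: "p \<noteq> 0"
    and cont: "isCont \<phi> x" and lt: "\<phi> x < \<phi> y"
  shows "inner p (x - y) < 0"
proof -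
  obtain r where r: "r > 0" and R: "\<And>z. dist z x < r \<Longrightarrow> dist (\<phi> z) (\<phi> x) < \<phi> y - \<phi> x"
    using cont lt unfolding continuous_at_eps_delta by (metis diff_gt_0_iff_gt)
  obtain r' where r': "r' > 0" and B: "ball x r' \<subseteq> \<Gamma>" using op x open_contains_ball by blast
  have np: "norm p > 0" using pnz by simp
  define s where "s = min r r' / (2 * norm p)"
  have s: "s > 0" using r r' np by (simp add: s_def)
  define x' where "x' = x + s *\<^sub>R p"
  have dx: "dist x' x = min r r' / 2" using np s r r' by (simp add: x'_def dist_norm s_def)
  hence "dist x' x < r" "dist x' x < r'" using r r' by auto
  hence "\<phi> x' < \<phi> y" "x' \<in> \<Gamma>" using R[of x'] B by (auto simp: dist_commute dist_real_def abs_less_iff)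
  hence "inner p (x' - y) \<le> 0" using qc_weak[OF qc y _ der] by auto
  moreover have "inner p (x' - y) = inner p (x - y) + s * (norm p)^2"
    by (simp add: x'_def inner_diff_right inner_add_right power2_norm_eq_inner)
  moreover have "s * (norm p)^2 > 0" using s np by simp
  ultimately show ?thesis by linarith
qed

theorem theorem6:
  fixes \<Gamma> X :: "'a::euclidean_space set"
    and f :: "'a \<Rightarrow> real" and df :: "'a \<Rightarrow> 'a"
    and m :: nat and g :: "nat \<Rightarrow> 'a \<Rightarrow> real" and dg :: "nat \<Rightarrow> 'a \<Rightarrow> 'a"
    and xbar :: 'a and lam :: "nat \<Rightarrow> real"
  assumes "open \<Gamma>" and "convex \<Gamma>"
    and "open X" and "convex X" and "X \<subseteq> \<Gamma>"
    and xbar: "xbar \<in> solution_set X m g f"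
    and f_diff: "\<forall>x\<in>\<Gamma>. (f has_derivative (\<lambda>h. inner (df x) h)) (at x)"
    and f_C1: "continuous_on \<Gamma> df"
    and f_qc: "quasiconvex_on \<Gamma> f"
    and g_act_diff: "\<forall>i\<in>active_set m g xbar. \<forall>x\<in>\<Gamma>.
                        (g i has_derivative (\<lambda>h. inner (dg i x) h)) (at x)"
    and g_act_qc: "\<forall>i\<in>active_set m g xbar. quasiconvex_on \<Gamma> (g i)"
    and g_inact_cont: "\<forall>i\<in>{1..m} - active_set m g xbar. isCont (g i) xbar"
    and "df xbar \<noteq> 0"
    and "MFCQ m g dg xbar"
    and lam_nonneg: "\<forall>i\<in>{1..m}. lam i \<ge> 0"
    and compl: "\<forall>i\<in>{1..m}. lam i * g i xbar = 0"
    and KKT: "df xbar + (\<Sum>i\<in>active_set m g xbar. lam i *\<^sub>R dg i xbar) = 0"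
  shows "solution_set X m g f = S1'' X m g dg df xbar lam
       \<and> S1'' X m g dg df xbar lam = S2'' X m g dg df xbar lam"
proof -
  note opG = \<open>open \<Gamma>\<close> and XG = \<open>X \<subseteq> \<Gamma>\<close> and cX = \<open>convex X\<close> and unz = \<open>df xbar \<noteq> 0\<close>
  define I where "I = active_set m g xbar"
  define J where "J = active_pos_set m g xbar lam"
  define u where "u = df xbar"
  define f0 where "f0 = f xbar"
  have unz': "u \<noteq> 0" using unz by (simp add: u_def)
  have nu: "norm u > 0" using unz' by simp
  have xX: "xbar \<in> X" and xfeas: "\<forall>i\<in>{1..m}. g i xbar \<le> 0" and xmin: "\<And>y. y \<in> feasible_set X m g \<Longrightarrow> f0 \<le> f y"
    using xbar by (auto simp: solution_set_def feasible_set_def f0_def)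
  have xG: "xbar \<in> \<Gamma>" using xX XG by auto
  have finI: "finite I" by (simp add: I_def active_set_def)
  have JI: "J \<subseteq> I" by (auto simp: I_def J_def active_set_def active_pos_set_def)
  have Jpos: "\<And>i. i \<in> J \<Longrightarrow> lam i > 0" by (simp add: J_def active_pos_set_def)
  have I1m: "\<And>i. i \<in> I \<Longrightarrow> i \<in> {1..m} \<and> g i xbar = 0" by (simp add: I_def active_set_def)
  have notJ: "\<And>i. i \<in> I \<Longrightarrow> i \<notin> J \<Longrightarrow> lam i = 0"
    using lam_nonneg I1m by (force simp: J_def active_pos_set_def)
  have KKT': "u = - (\<Sum>i\<in>I. lam i *\<^sub>R dg i xbar)"
    using KKT by (simp add: u_def I_def eq_neg_iff_add_eq_0)
  have inner_u: "\<And>v. inner u v = - (\<Sum>i\<in>I. lam i * inner (dg i xbar) v)"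
    by (simp add: KKT' inner_sum_left)
  have dgnz: "\<And>i. i \<in> I \<Longrightarrow> dg i xbar \<noteq> 0"
    using \<open>MFCQ m g dg xbar\<close> unfolding MFCQ_def I_def by force
  have fder: "\<And>z. z \<in> \<Gamma> \<Longrightarrow> (f has_derivative (\<lambda>h. inner (df z) h)) (at z)" using f_diff by auto
  have fcont: "\<And>z. z \<in> \<Gamma> \<Longrightarrow> isCont f z" using fder has_derivative_continuous by blast
  have gder: "\<And>i z. i \<in> I \<Longrightarrow> z \<in> \<Gamma> \<Longrightarrow> (g i has_derivative (\<lambda>h. inner (dg i z) h)) (at z)"
    using g_act_diff by (auto simp: I_def)
  have gcont: "\<And>i z. i \<in> I \<Longrightarrow> z \<in> \<Gamma> \<Longrightarrow> isCont (g i) z" using gder has_derivative_continuous by blast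
  have gqc: "\<And>i. i \<in> I \<Longrightarrow> quasiconvex_on \<Gamma> (g i)" using g_act_qc by (auto simp: I_def)
  have dfcont: "isCont df xbar" using f_C1 opG xG continuous_on_eq_continuous_at by blast

  have A: "x \<in> S1'' X m g dg df xbar lam" if xs: "x \<in> solution_set X m g f" for x
  proof -
    have xX': "x \<in> X" and xfe: "\<forall>i\<in>{1..m}. g i x \<le> 0" and xle: "f x \<le> f0"
      using xs xbar by (auto simp: solution_set_def feasible_set_def f0_def)
    have fx: "f x = f0" using xle xmin xs by (force simp: solution_set_def)
    have xG': "x \<in> \<Gamma>" using xX' XG by auto
    define v where "v = x - xbar"
    have hu: "inner u v \<le> 0"
      using qc_weak[OF f_qc xG xG' fder[OF xG]] fx by (simp add: u_def v_def f0_def)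
    have hg: "lam i * inner (dg i xbar) v \<le> 0" if "i \<in> I" for i
    proof -
      have "inner (dg i xbar) v \<le> 0"
        using qc_weak[OF gqc[OF that] xG xG' gder[OF that xG]] I1m[OF that] xfe by (simp add: v_def)
      thus ?thesis using lam_nonneg I1m[OF that] by (simp add: mult_nonneg_nonpos)
    qed
    have "(\<Sum>i\<in>I. - (lam i * inner (dg i xbar) v)) = 0"
    proof -
      have "(\<Sum>i\<in>I. - (lam i * inner (dg i xbar) v)) \<ge> 0" using hg by (simp add: sum_nonneg)
      moreover have "(\<Sum>i\<in>I. - (lam i * inner (dg i xbar) v)) = inner u v"
        by (simp add: inner_u sum_negf)
      ultimately show ?thesis using hu by linarith
    qed
    moreover have "\<forall>i\<in>I. 0 \<le> - (lam i * inner (dg i xbar) v)" using hg by simp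
    ultimately have "\<forall>i\<in>I. - (lam i * inner (dg i xbar) v) = 0"
      using sum_nonneg_eq_0_iff[OF finI, of "\<lambda>i. - (lam i * inner (dg i xbar) v)"] by blast
    hence zero: "\<And>i. i \<in> I \<Longrightarrow> lam i * inner (dg i xbar) v = 0" by simp
    have "(\<Sum>i\<in>I. lam i * inner (dg i xbar) v) = 0" using zero by (intro sum.neutral) blast
    hence huv: "inner u v = 0" using inner_u by simp
    have dgJ: "\<forall>i\<in>J. inner (dg i xbar) (x - xbar) = 0"
      using zero JI Jpos v_def by (metis mult_eq_0_iff order_less_irrefl subsetD)
    have gJ: "\<forall>i\<in>J. g i x = 0"
    proof
      fix i assume iJ: "i \<in> J"
      hence iI: "i \<in> I" using JI by auto
      show "g i x = 0"
      proof (rule ccontr)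
        assume "g i x \<noteq> 0"
        hence "g i x < g i xbar" using xfe I1m[OF iI] by force
        from qc_strict[OF gqc[OF iI] opG xG xG' gder[OF iI xG] dgnz[OF iI] gcont[OF iI xG'] this]
        show False using dgJ iJ by simp
      qed
    qed
    have X1: "x \<in> X1 X m g xbar lam"
      using xX' gJ xfe by (auto simp: X1_def J_def)
    have seg: "f (xbar + t *\<^sub>R v) = f0" "xbar + t *\<^sub>R v \<in> \<Gamma>" if t: "0 \<le> t" "t \<le> 1" for t
    proof -
      have "xbar + t *\<^sub>R v = (1 - t) *\<^sub>R xbar + t *\<^sub>R x" by (simp add: v_def algebra_simps)
      hence zX: "xbar + t *\<^sub>R v \<in> X" using cX xX xX' t by (simp add: convex_alt)
      thus zG: "xbar + t *\<^sub>R v \<in> \<Gamma>" using XG by auto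
      have "f (xbar + t *\<^sub>R (x - xbar)) \<le> max (f xbar) (f x)"
        using f_qc xG xG' t unfolding quasiconvex_on_def by blast
      hence le: "f (xbar + t *\<^sub>R v) \<le> f0" using fx by (simp add: v_def f0_def)
      show "f (xbar + t *\<^sub>R v) = f0"
      proof (rule ccontr)
        assume "f (xbar + t *\<^sub>R v) \<noteq> f0"
        hence "f (xbar + t *\<^sub>R v) < f xbar" using le by (simp add: f0_def)
        from qc_strict[OF f_qc opG xG zG fder[OF xG] unz fcont[OF zG] this]
        show False using huv by (simp add: u_def)
      qed
    qed
    have dfnz: "df x \<noteq> 0"
    proof
      assume dx0: "df x = 0"
      obtain r where r: "r > 0" and R: "\<And>z. dist z xbar < r \<Longrightarrow> dist (df z) u < norm u"
        using dfcont nu unfolding continuous_at_eps_delta u_def by blast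
      define mm where "mm = min (1/2) (r / (2 * (norm v + 1)))"
      have nv1: "norm v + 1 > 0" using norm_ge_zero[of v] by linarith
      have mm0: "mm > 0" using r nv1 by (simp add: mm_def)
      have mm1: "mm \<le> 1/2" unfolding mm_def by (rule min.cobounded1)
      have "mm * norm v \<le> r / (2 * (norm v + 1)) * (norm v + 1)"
      proof (rule mult_mono)
        show "mm \<le> r / (2 * (norm v + 1))" unfolding mm_def by (rule min.cobounded2)
        have "2 * (norm v + 1) > 0" using nv1 by simp
        thus "0 \<le> r / (2 * (norm v + 1))" using r divide_pos_pos less_imp_le by blast
      qed simp_all
      moreover have "r / (2 * (norm v + 1)) * (norm v + 1) = r / 2"
        using nv1 by (simp add: divide_simps)
      ultimately have "mm * norm v < r" using r by linarith
      define z where "z = xbar + mm *\<^sub>R v"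
      have zG: "z \<in> \<Gamma>" and fz: "f z = f0" using seg[of mm] mm0 mm1 by (auto simp: z_def)
      have "dist z xbar < r" using \<open>mm * norm v < r\<close> mm0 by (simp add: z_def dist_norm)
      hence dd: "norm (df z - u) < norm u" using R by (simp add: dist_norm)
      define d where "d = inner (df z) u"
      have "inner (df z - u) u \<ge> - (norm (df z - u) * norm u)"
        using Cauchy_Schwarz_ineq2[of "df z - u" u] by (simp add: abs_le_iff)
      moreover have "inner (df z - u) u = d - (norm u)^2" by (simp add: d_def inner_diff_left power2_norm_eq_inner)
      moreover have "norm (df z - u) * norm u < norm u * norm u" using dd nu by simp
      ultimately have d0: "d > 0" by (simp add: power2_eq_square)
      obtain d2 where d2: "d2 > 0" and D2: "\<And>y. norm (y - z) < d2 \<Longrightarrow> \<bar>f y - f z - inner (df z) (y - z)\<bar> \<le> d / (2 * norm u) * norm (y - z)"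
        using taylor1[OF fder[OF zG], of "d / (2 * norm u)"] d0 nu by auto
      obtain d1 where d1: "d1 > 0" and D1: "\<And>y. norm (y - x) < d1 \<Longrightarrow> \<bar>f y - f x - inner (df x) (y - x)\<bar> \<le> mm * d / (4 * norm u) * norm (y - x)"
        using taylor1[OF fder[OF xG'], of "mm * d / (4 * norm u)"] d0 nu mm0 by auto
      obtain r0 where r0: "r0 > 0" and B: "ball x r0 \<subseteq> \<Gamma>" using opG xG' open_contains_ball by blast
      define \<delta> where "\<delta> = min (min d1 d2) r0 / (2 * norm u)"
      have \<delta>0: "\<delta> > 0" using d1 d2 r0 nu by (simp add: \<delta>_def)
      have n\<delta>: "\<delta> * norm u = min (min d1 d2) r0 / 2" using nu by (simp add: \<delta>_def)
      define Q where "Q = x + \<delta> *\<^sub>R u"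
      have nQ: "norm (Q - x) = \<delta> * norm u" using \<delta>0 by (simp add: Q_def)
      have QG: "Q \<in> \<Gamma>" using B nQ n\<delta> r0 d1 d2 by (auto simp: dist_norm norm_minus_commute)
      have fQ: "f Q \<le> f0 + mm * d * \<delta> / 4"
      proof -
        have "norm (Q - x) < d1" using nQ n\<delta> d1 d2 r0 by auto
        from D1[OF this] have "f Q - f x \<le> mm * d / (4 * norm u) * (\<delta> * norm u)"
          using dx0 nQ by simp
        also have "\<dots> = mm * d * \<delta> / 4" using nu by (simp add: field_simps)
        finally show ?thesis using fx by simp
      qed
      define M where "M = xbar + mm *\<^sub>R (Q - xbar)"
      have MM: "M = z + (mm * \<delta>) *\<^sub>R u" by (simp add: M_def z_def Q_def v_def algebra_simps)
      have fM1: "f M \<le> f0 + mm * d * \<delta> / 4"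
      proof -
        have "f M \<le> max (f xbar) (f Q)"
          using f_qc xG QG mm0 mm1 unfolding quasiconvex_on_def M_def by auto
        moreover have "mm * d * \<delta> > 0" using mm0 d0 \<delta>0 by simp
        hence "max (f xbar) (f Q) \<le> f0 + mm * d * \<delta> / 4"
          using fQ by (intro max.boundedI) (simp_all add: f0_def)
        ultimately show ?thesis by linarith
      qed
      have fM2: "f M \<ge> f0 + mm * \<delta> * d / 2"
      proof -
        have nMz: "norm (M - z) = mm * \<delta> * norm u" using mm0 \<delta>0 by (simp add: MM)
        have "mm * \<delta> * norm u \<le> \<delta> * norm u" using mm1 \<delta>0 nu by simp
        hence "norm (M - z) < d2" using nMz n\<delta> d2 d1 r0 by auto
        from D2[OF this] have "f M - f z - inner (df z) (M - z) \<ge> - (d / (2 * norm u) * (mm * \<delta> * norm u))"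
          using nMz by simp
        moreover have "inner (df z) (M - z) = mm * \<delta> * d" by (simp add: MM d_def)
        moreover have "d / (2 * norm u) * (mm * \<delta> * norm u) = mm * \<delta> * d / 2" using nu by (simp add: field_simps)
        ultimately show ?thesis using fz by simp
      qed
      have "mm * \<delta> * d > 0" using mm0 \<delta>0 d0 by simp
      moreover have "mm * d * \<delta> = mm * \<delta> * d" by (simp add: mult_ac)
      ultimately show False using fM1 fM2 by linarith
    qed
    define w where "w = df x"
    have wnz: "w \<noteq> 0" using dfnz by (simp add: w_def)
    have halfsp: "inner u v' < 0" if wv: "inner w v' < 0" for v'
    proof -
      have v'nz: "v' \<noteq> 0" using wv by auto
      hence nv': "norm v' > 0" by simp
      define ee where "ee = (- inner w v') / (2 * norm v')"
      have "- inner w v' > 0" "2 * norm v' > 0" using wv nv' by simp_all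
      hence ee: "ee > 0" unfolding ee_def by (rule divide_pos_pos)
      obtain d where d: "d > 0" and D: "\<And>y. norm (y - x) < d \<Longrightarrow> \<bar>f y - f x - inner (df x) (y - x)\<bar> \<le> ee * norm (y - x)"
        using taylor1[OF fder[OF xG'] ee] by blast
      obtain r0 where r0: "r0 > 0" and B: "ball x r0 \<subseteq> \<Gamma>" using opG xG' open_contains_ball by blast
      define s where "s = min d r0 / (2 * norm v')"
      have s0: "s > 0" using d r0 nv' by (simp add: s_def)
      have ns: "s * norm v' = min d r0 / 2" using nv' by (simp add: s_def)
      define y where "y = x + s *\<^sub>R v'"
      have ny: "norm (y - x) = s * norm v'" using s0 by (simp add: y_def)
      have yG: "y \<in> \<Gamma>" using B ny ns d r0 by (auto simp: dist_norm norm_minus_commute)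
      have "norm (y - x) < d" using ny ns d r0 by auto
      from D[OF this] have a1: "\<bar>f y - f x - inner (df x) (y - x)\<bar> \<le> ee * (s * norm v')"
        using ny by simp
      have a2: "inner (df x) (y - x) = s * inner w v'" by (simp add: y_def w_def)
      have a3: "ee * (s * norm v') = - (s * inner w v') / 2"
        using nv' by (simp add: ee_def field_simps)
      have a4: "f y - f x - inner (df x) (y - x) \<le> \<bar>f y - f x - inner (df x) (y - x)\<bar>" by (rule abs_ge_self)
      have a5: "s * inner w v' < 0" using s0 wv by (simp add: mult_pos_neg)
      have a6: "f x = f xbar" using fx by (simp add: f0_def)
      have "f y < f xbar" using a1 a2 a3 a4 a5 a6 by linarith
      from qc_strict[OF f_qc opG xG yG fder[OF xG] unz fcont[OF yG] this]
      have "inner u (y - xbar) < 0" by (simp add: u_def)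
      moreover have "y - xbar = v + s *\<^sub>R v'" by (simp add: y_def v_def)
      ultimately have "s * inner u v' < 0" using huv by (simp add: inner_add_right)
      thus ?thesis using s0 by (simp add: mult_less_0_iff)
    qed
    have nw: "norm w > 0" using wnz by simp
    have uw: "inner u w > 0"
      using halfsp[of "- w"] wnz by simp
    define a where "a = inner u w / (norm w)^2"
    have a0: "a > 0" using uw nw by (simp add: a_def)
    define q where "q = u - a *\<^sub>R w"
    have wq: "inner w q = 0" using nw
      by (simp add: q_def a_def inner_diff_right power2_norm_eq_inner inner_commute)
    have uq: "inner u q = 0"
    proof (rule ccontr)
      assume "inner u q \<noteq> 0"
      then consider "inner u q > 0" | "inner u q < 0" by linarith
      thus False
      proof cases
        case 1
        define e where "e = inner u q / (2 * inner u w)"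
        have e0: "e > 0" using 1 uw by (simp add: e_def)
        have "inner w (q - e *\<^sub>R w) < 0" using wq e0 nw
          by (simp add: inner_diff_right power2_norm_eq_inner[symmetric])
        hence "inner u (q - e *\<^sub>R w) < 0" by (rule halfsp)
        moreover have "inner u (q - e *\<^sub>R w) = inner u q / 2" using uw
          by (simp add: inner_diff_right e_def)
        ultimately show False using 1 by simp
      next
        case 2
        define e where "e = - inner u q / (2 * inner u w)"
        have "- inner u q > 0" "2 * inner u w > 0" using 2 uw by simp_all
        hence e0: "e > 0" unfolding e_def by (rule divide_pos_pos)
        have "inner w (- q - e *\<^sub>R w) < 0" using wq e0 nw
          by (simp add: inner_diff_right power2_norm_eq_inner[symmetric])
        hence "inner u (- q - e *\<^sub>R w) < 0" by (rule halfsp)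
        moreover have "inner u (- q - e *\<^sub>R w) = - inner u q - e * inner u w"
          by (simp add: inner_diff_right)
        moreover have "e * inner u w = - inner u q / 2" using uw
          by (simp add: e_def)
        ultimately show False using 2 by linarith
      qed
    qed
    have "inner q q = 0" using uq wq by (simp add: q_def inner_diff_left inner_commute)
    hence "q = 0" by simp
    hence uaw: "u = a *\<^sub>R w" by (simp add: q_def)
    have "(1 / norm w) *\<^sub>R w = (1 / norm u) *\<^sub>R u"
      using a0 nw by (simp add: uaw)
    thus ?thesis using X1 dgJ dfnz by (simp add: S1''_def J_def w_def u_def)
  qed

  have B: "x \<in> solution_set X m g f" if xs: "x \<in> S2'' X m g dg df xbar lam" for x
  proof -
    have X1: "x \<in> X1 X m g xbar lam" and hJ: "\<forall>i\<in>J. inner (dg i xbar) (x - xbar) \<ge> 0"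
      and wnz: "df x \<noteq> 0" and N: "(1 / norm (df x)) *\<^sub>R df x = (1 / norm u) *\<^sub>R u"
      using xs by (auto simp: S2''_def J_def u_def)
    have xX': "x \<in> X" and gJ: "\<forall>i\<in>J. g i x = 0" and gr: "\<forall>i\<in>{1..m} - J. g i x \<le> 0"
      using X1 by (auto simp: X1_def J_def)
    have JS: "J \<subseteq> {1..m}" by (auto simp: J_def active_pos_set_def)
    have xfe: "x \<in> feasible_set X m g" using xX' gJ gr JS by (force simp: feasible_set_def)
    have xG': "x \<in> \<Gamma>" using xX' XG by auto
    define v where "v = x - xbar"
    have "lam i * inner (dg i xbar) v \<ge> 0" if "i \<in> I" for i
    proof (cases "i \<in> J")
      case True thus ?thesis using hJ Jpos[OF True] by (simp add: v_def)
    next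
      case False thus ?thesis using notJ[OF that] by simp
    qed
    hence "(\<Sum>i\<in>I. lam i * inner (dg i xbar) v) \<ge> 0" by (simp add: sum_nonneg)
    hence hu: "inner u v \<le> 0" using inner_u by simp
    define w where "w = df x"
    have nw: "norm w > 0" using wnz by (simp add: w_def)
    have "w = norm w *\<^sub>R ((1 / norm w) *\<^sub>R w)" using nw by simp
    also have "\<dots> = (norm w / norm u) *\<^sub>R u" using N by (simp add: w_def)
    finally have wu: "w = (norm w / norm u) *\<^sub>R u" .
    have iw: "inner w v = (norm w / norm u) * inner u v" by (subst wu) simp
    have "norm w / norm u \<ge> 0" by simp
    hence hw: "inner w v \<le> 0" using hu iw mult_nonneg_nonpos by metis
    have fxle: "f x \<le> f0"
    proof (rule ccontr)
      assume "\<not> f x \<le> f0"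
      hence "f xbar < f x" by (simp add: f0_def)
      from qc_strict[OF f_qc opG xG' xG fder[OF xG'] wnz fcont[OF xG] this]
      have "inner w (xbar - x) < 0" by (simp add: w_def)
      hence "inner w v > 0" by (simp add: v_def inner_diff_right)
      thus False using hw by simp
    qed
    show ?thesis using xfe fxle xmin by (force simp: solution_set_def)
  qed

  have C: "S1'' X m g dg df xbar lam \<subseteq> S2'' X m g dg df xbar lam"
    by (auto simp: S1''_def S2''_def)
  show ?thesis using A B C by blast
qed

end
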